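(* Let $\mathcal X,\mathcal Y$ be complex Hilbert spaces and $A:\mathcal X\supset\operatorname{dom}A\to\mathcal Y$ a closed, densely defined linear operator with $\|Ax\|_{\mathcal Y}\ge c\|x\|_{\mathcal X}$ for some $c>0$ and all $x\in\operatorname{dom}A$. Let $\mathcal X_h$ denote $\operatorname{dom}A$ with inner product $\langle x,y\rangle_{\mathcal X_h}=\langle Ax,Ay\rangle_{\mathcal Y}$, and $\mathcal Z_h:=\mathcal X_h\times\mathcal X$ with the product inner product. Let $B:\mathcal Y\supset\operatorname{dom}B\to\mathcal X$ be closed, densely defined, with $A^*\subset-B$. Define $\mathcal A:\mathcal Z_h\supset\operatorname{dom}\mathcal A\to\mathcal Z_h$ by $\operatorname{dom}\mathcal A=\{(z_1,z_2)\in\mathcal X_h\times\mathcal X_h:\ Az_1\in\operatorname{dom}B\}$, $\mathcal A(z_1,z_2)=(z_2,\,BAz_1)$, and $\mathcal A_{\mathrm s}:\mathcal Z_h\supset\operatorname{dom}\mathcal A_{\mathrm s}\to\mathcal Z_h$ by $\operatorname{dom}\mathcal A_{\mathrm s}=\{(z_1,z_2)\in\mathcal X_h\times\mathcal X_h:\ z_1\in\operatorname{dom}(A^*A)\}$, $\mathcal A_{\mathrm s}(z_1,z_2)=(z_2,\,-A^*Az_1)$. Then $\mathcal A$ is densely defined and closed in $\mathcal Z_h$, $\mathcal A_{\mathrm s}\subset\mathcal A$, and $\mathcal A^*\subset-\mathcal A$ (adjoint taken in $\mathcal Z_h$).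
   Context: $\mathcal X_h$ is a Hilbert space (its norm equals $\|(A^*A)^{1/2}\cdot\|_{\mathcal X}$). For operators, $T_1\subset T_2$ means $T_2$ extends $T_1$. The domain of $\mathcal A_{\mathrm s}$ is equivalently the set of $(z_1,z_2)\in\mathcal X_h\times\mathcal X_h$ for which the functional $y\mapsto\langle Az_1,Ay\rangle_{\mathcal Y}$ on $\mathcal X_h$ is represented by an element of $\mathcal X$ (i.e. $Sz_1\in\mathcal X$ for the extension $S:\mathcal X_h\to\mathcal X_h^*$ of $A^*A$). *)

theory Defs
  imports "HOL-Analysis.Analysis"
begin

text \<open>Complex vector spaces are represented by a type of class ab_group_add together with
 an explicit complex scalar multiplication sm.  Inner products are explicit functions
 ip (linear in the first, conjugate linear in the second argument) on a carrier set S,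
 so that spaces such as X_h = (dom A, <A.,A.>) can be handled uniformly.\<close>

definition cvector_space :: "(complex \<Rightarrow> 'a::ab_group_add \<Rightarrow> 'a) \<Rightarrow> bool" where
  "cvector_space sm \<longleftrightarrow>
     (\<forall>a x y. sm a (x + y) = sm a x + sm a y) \<and>
     (\<forall>a b x. sm (a + b) x = sm a x + sm b x) \<and>
     (\<forall>a b x. sm a (sm b x) = sm (a * b) x) \<and>
     (\<forall>x. sm 1 x = x)"

definition csubspace :: "(complex \<Rightarrow> 'a::ab_group_add \<Rightarrow> 'a) \<Rightarrow> 'a set \<Rightarrow> bool" where
  "csubspace sm S \<longleftrightarrow> 0 \<in> S \<and> (\<forall>x\<in>S. \<forall>y\<in>S. x + y \<in> S) \<and> (\<forall>a. \<forall>x\<in>S. sm a x \<in> S)"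

definition inner_product_on ::
  "(complex \<Rightarrow> 'a::ab_group_add \<Rightarrow> 'a) \<Rightarrow> 'a set \<Rightarrow> ('a \<Rightarrow> 'a \<Rightarrow> complex) \<Rightarrow> bool" where
  "inner_product_on sm S ip \<longleftrightarrow> csubspace sm S \<and>
     (\<forall>x\<in>S. \<forall>y\<in>S. ip x y = cnj (ip y x)) \<and>
     (\<forall>x\<in>S. \<forall>y\<in>S. \<forall>z\<in>S. ip (x + y) z = ip x z + ip y z) \<and>
     (\<forall>a. \<forall>x\<in>S. \<forall>y\<in>S. ip (sm a x) y = a * ip x y) \<and>
     (\<forall>x\<in>S. 0 \<le> Re (ip x x)) \<and>
     (\<forall>x\<in>S. ip x x = 0 \<longrightarrow> x = 0)"

definition ipnorm :: "('a \<Rightarrow> 'a \<Rightarrow> complex) \<Rightarrow> 'a \<Rightarrow> real" where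
  "ipnorm ip x = sqrt (Re (ip x x))"

definition ip_conv :: "('a::ab_group_add \<Rightarrow> 'a \<Rightarrow> complex) \<Rightarrow> (nat \<Rightarrow> 'a) \<Rightarrow> 'a \<Rightarrow> bool" where
  "ip_conv ip f l \<longleftrightarrow> (\<forall>e>0. \<exists>N. \<forall>n\<ge>N. ipnorm ip (f n - l) < e)"

definition ip_cauchy :: "('a::ab_group_add \<Rightarrow> 'a \<Rightarrow> complex) \<Rightarrow> (nat \<Rightarrow> 'a) \<Rightarrow> bool" where
  "ip_cauchy ip f \<longleftrightarrow> (\<forall>e>0. \<exists>N. \<forall>m\<ge>N. \<forall>n\<ge>N. ipnorm ip (f m - f n) < e)"

definition hilbert_space ::
  "(complex \<Rightarrow> 'a::ab_group_add \<Rightarrow> 'a) \<Rightarrow> 'a set \<Rightarrow> ('a \<Rightarrow> 'a \<Rightarrow> complex) \<Rightarrow> bool" where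
  "hilbert_space sm S ip \<longleftrightarrow> cvector_space sm \<and> inner_product_on sm S ip \<and>
     (\<forall>f. (\<forall>n. f n \<in> S) \<and> ip_cauchy ip f \<longrightarrow> (\<exists>l\<in>S. ip_conv ip f l))"

definition linear_operator ::
  "(complex \<Rightarrow> 'a::ab_group_add \<Rightarrow> 'a) \<Rightarrow> 'a set \<Rightarrow> (complex \<Rightarrow> 'b::ab_group_add \<Rightarrow> 'b) \<Rightarrow> 'b set
    \<Rightarrow> 'a set \<Rightarrow> ('a \<Rightarrow> 'b) \<Rightarrow> bool" where
  "linear_operator sm S sm' S' D T \<longleftrightarrow> D \<subseteq> S \<and> csubspace sm D \<and> (\<forall>x\<in>D. T x \<in> S') \<and>
     (\<forall>x\<in>D. \<forall>y\<in>D. T (x + y) = T x + T y) \<and> (\<forall>a. \<forall>x\<in>D. T (sm a x) = sm' a (T x))"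

definition densely_defined :: "'a set \<Rightarrow> ('a::ab_group_add \<Rightarrow> 'a \<Rightarrow> complex) \<Rightarrow> 'a set \<Rightarrow> bool" where
  "densely_defined S ip D \<longleftrightarrow> D \<subseteq> S \<and> (\<forall>x\<in>S. \<forall>e>0. \<exists>d\<in>D. ipnorm ip (x - d) < e)"

definition closed_operator ::
  "'a set \<Rightarrow> ('a::ab_group_add \<Rightarrow> 'a \<Rightarrow> complex) \<Rightarrow> 'b set \<Rightarrow> ('b::ab_group_add \<Rightarrow> 'b \<Rightarrow> complex)
    \<Rightarrow> 'a set \<Rightarrow> ('a \<Rightarrow> 'b) \<Rightarrow> bool" where
  "closed_operator S ip S' ip' D T \<longleftrightarrow>
     (\<forall>f x y. (\<forall>n. f n \<in> D) \<and> x \<in> S \<and> y \<in> S' \<and> ip_conv ip f x \<and> ip_conv ip' (\<lambda>n. T (f n)) y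
        \<longrightarrow> x \<in> D \<and> T x = y)"

definition adj_dom ::
  "'a set \<Rightarrow> ('a \<Rightarrow> 'a \<Rightarrow> complex) \<Rightarrow> 'b set \<Rightarrow> ('b \<Rightarrow> 'b \<Rightarrow> complex)
    \<Rightarrow> 'a set \<Rightarrow> ('a \<Rightarrow> 'b) \<Rightarrow> 'b set" where
  "adj_dom S ip S' ip' D T = {y\<in>S'. \<exists>z\<in>S. \<forall>x\<in>D. ip' (T x) y = ip x z}"

definition adj_fun ::
  "'a set \<Rightarrow> ('a \<Rightarrow> 'a \<Rightarrow> complex) \<Rightarrow> 'b set \<Rightarrow> ('b \<Rightarrow> 'b \<Rightarrow> complex)
    \<Rightarrow> 'a set \<Rightarrow> ('a \<Rightarrow> 'b) \<Rightarrow> 'b \<Rightarrow> 'a" where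
  "adj_fun S ip S' ip' D T y = (THE z. z \<in> S \<and> (\<forall>x\<in>D. ip' (T x) y = ip x z))"

definition op_incl :: "'a set \<Rightarrow> ('a \<Rightarrow> 'b) \<Rightarrow> 'a set \<Rightarrow> ('a \<Rightarrow> 'b) \<Rightarrow> bool" where
  "op_incl D1 T1 D2 T2 \<longleftrightarrow> D1 \<subseteq> D2 \<and> (\<forall>x\<in>D1. T1 x = T2 x)"

end

theory Submission
  imports Defs
begin


locale ips =
  fixes sm :: "complex \<Rightarrow> 'a::ab_group_add \<Rightarrow> 'a" and S :: "'a set" and ip :: "'a \<Rightarrow> 'a \<Rightarrow> complex"
  assumes cv: "cvector_space sm" and ipo: "inner_product_on sm S ip"
begin

lemma sm_add: "sm a (x + y) = sm a x + sm a y" using cv unfolding cvector_space_def by simp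
lemma sm_add2: "sm (a + b) x = sm a x + sm b x" using cv unfolding cvector_space_def by simp
lemma sm_assoc: "sm a (sm b x) = sm (a * b) x" using cv unfolding cvector_space_def by simp
lemma sm_one[simp]: "sm 1 x = x" using cv unfolding cvector_space_def by simp
lemma sm_zero[simp]: "sm 0 x = 0"
  using sm_add2[of 0 0 x] by simp
lemma sm_neg: "sm (- a) x = - sm a x"
  using sm_add2[of "-a" a x] by (simp add: eq_neg_iff_add_eq_0)
lemma sm_m1: "sm (-1) x = - x" using sm_neg[of 1 x] by simp

lemma sub: "csubspace sm S" using ipo unfolding inner_product_on_def by simp
lemma S0[simp]: "0 \<in> S" using sub unfolding csubspace_def by simp
lemma S_add[simp]: "x \<in> S \<Longrightarrow> y \<in> S \<Longrightarrow> x + y \<in> S" using sub unfolding csubspace_def by simp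
lemma S_sm[simp]: "x \<in> S \<Longrightarrow> sm a x \<in> S" using sub unfolding csubspace_def by simp
lemma S_neg[simp]: "x \<in> S \<Longrightarrow> - x \<in> S" using S_sm[of x "-1"] sm_m1 by simp
lemma S_diff[simp]: "x \<in> S \<Longrightarrow> y \<in> S \<Longrightarrow> x - y \<in> S"
  using S_add[of x "-y"] by simp

lemma ipo_sym: "\<forall>x\<in>S. \<forall>y\<in>S. ip x y = cnj (ip y x)"
  by (insert ipo[unfolded inner_product_on_def], elim conjE, assumption)
lemma ipo_add: "\<forall>x\<in>S. \<forall>y\<in>S. \<forall>z\<in>S. ip (x + y) z = ip x z + ip y z"
  by (insert ipo[unfolded inner_product_on_def], elim conjE, assumption)
lemma ipo_sm: "\<forall>a. \<forall>x\<in>S. \<forall>y\<in>S. ip (sm a x) y = a * ip x y"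
  by (insert ipo[unfolded inner_product_on_def], elim conjE, assumption)
lemma ipo_pos: "\<forall>x\<in>S. 0 \<le> Re (ip x x)"
  by (insert ipo[unfolded inner_product_on_def], elim conjE, assumption)
lemma ipo_def: "\<forall>x\<in>S. ip x x = 0 \<longrightarrow> x = 0"
  by (insert ipo[unfolded inner_product_on_def], elim conjE, assumption)

lemma ip_sym: assumes "x \<in> S" "y \<in> S" shows "ip x y = cnj (ip y x)"
  using bspec[OF bspec[OF ipo_sym assms(1)] assms(2)] .
lemma ip_add1: assumes "x \<in> S" "y \<in> S" "z \<in> S" shows "ip (x + y) z = ip x z + ip y z"
  using bspec[OF bspec[OF bspec[OF ipo_add assms(1)] assms(2)] assms(3)] .
lemma ip_sm1: assumes "x \<in> S" "y \<in> S" shows "ip (sm a x) y = a * ip x y"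
  using bspec[OF bspec[OF spec[OF ipo_sm, of a] assms(1)] assms(2)] .
lemma ip_pos: assumes "x \<in> S" shows "0 \<le> Re (ip x x)"
  using bspec[OF ipo_pos assms] .
lemma ip_def0: assumes "x \<in> S" "ip x x = 0" shows "x = 0"
  using mp[OF bspec[OF ipo_def assms(1)] assms(2)] .

lemma ip_add2: "x \<in> S \<Longrightarrow> y \<in> S \<Longrightarrow> z \<in> S \<Longrightarrow> ip x (y + z) = ip x y + ip x z"
  by (simp add: ip_sym[of x] ip_add1)
lemma ip_sm2: "x \<in> S \<Longrightarrow> y \<in> S \<Longrightarrow> ip x (sm a y) = cnj a * ip x y"
  by (simp add: ip_sym[of x] ip_sm1)
lemma ip_neg1: "x \<in> S \<Longrightarrow> y \<in> S \<Longrightarrow> ip (- x) y = - ip x y"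
  using ip_sm1[of x y "-1"] sm_m1 by simp
lemma ip_neg2: "x \<in> S \<Longrightarrow> y \<in> S \<Longrightarrow> ip x (- y) = - ip x y"
  using ip_sm2[of x y "-1"] sm_m1 by simp
lemma ip_diff1: "x \<in> S \<Longrightarrow> y \<in> S \<Longrightarrow> z \<in> S \<Longrightarrow> ip (x - y) z = ip x z - ip y z"
  using ip_add1[of x "-y" z] ip_neg1[of y z] by simp
lemma ip_diff2: "x \<in> S \<Longrightarrow> y \<in> S \<Longrightarrow> z \<in> S \<Longrightarrow> ip x (y - z) = ip x y - ip x z"
  using ip_add2[of x y "-z"] ip_neg2[of x z] by simp
lemma ip_01[simp]: "y \<in> S \<Longrightarrow> ip 0 y = 0"
  using ip_add1[of 0 0 y] by simp
lemma ip_02[simp]: "y \<in> S \<Longrightarrow> ip y 0 = 0"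
  using ip_add2[of y 0 0] by simp
lemma ip_self_real: assumes "x \<in> S" shows "ip x x = complex_of_real (Re (ip x x))"
proof -
  have h: "ip x x = cnj (ip x x)" by (rule ip_sym[OF assms assms])
  have "Im (ip x x) = - Im (ip x x)" using arg_cong[OF h, of Im] by simp
  then have "Im (ip x x) = 0" by simp
  then show ?thesis by (simp add: complex_eq_iff)
qed
lemma ip_self0: assumes "x \<in> S" "Re (ip x x) = 0" shows "x = 0"
proof -
  have "ip x x = 0" using ip_self_real[OF assms(1)] assms(2) by simp
  then show ?thesis using ip_def0[OF assms(1)] by blast
qed

definition N where "N x = ipnorm ip x"
lemma N_ge0: "x \<in> S \<Longrightarrow> 0 \<le> N x" using ip_pos by (simp add: N_def ipnorm_def)
lemma N_sq: assumes "x \<in> S" shows "(N x)^2 = Re (ip x x)"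
  using ip_pos[OF assms] by (simp add: N_def ipnorm_def)
lemma N0_iff: assumes "x \<in> S" shows "N x = 0 \<longleftrightarrow> x = 0"
proof
  assume "N x = 0" then show "x = 0" using ip_self0[OF assms] ip_pos[OF assms] by (simp add: N_def ipnorm_def)
qed (simp add: N_def ipnorm_def)

lemma CS_sq: assumes "x \<in> S" "y \<in> S" shows "(cmod (ip x y))^2 \<le> Re (ip x x) * Re (ip y y)"
proof (cases "y = 0")
  case True then show ?thesis using assms by simp
next
  case False
  define q where "q = Re (ip y y)"
  have "q \<noteq> 0" using ip_self0[OF assms(2)] False q_def by auto
  then have q: "q > 0" using ip_pos[OF assms(2)] q_def by linarith
  have yy: "ip y y = complex_of_real q" using ip_self_real[OF assms(2)] q_def by simp
  define t where "t = ip x y / complex_of_real q"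
  have cn: "cnj (ip x y) * ip x y = complex_of_real ((cmod (ip x y))^2)"
    by (metis complex_norm_square mult.commute)
  have "0 \<le> Re (ip (x - sm t y) (x - sm t y))" using assms by (intro ip_pos) simp
  also have "ip (x - sm t y) (x - sm t y) = ip x x - cnj t * ip x y - t * ip y x + t * cnj t * ip y y"
    using assms by (simp add: ip_diff1 ip_diff2 ip_sm1 ip_sm2 algebra_simps)
  also have "ip y x = cnj (ip x y)" using assms ip_sym by blast
  finally have "0 \<le> Re (ip x x - cnj t * ip x y - t * cnj (ip x y) + t * cnj t * ip y y)" .
  also have "cnj t * ip x y = complex_of_real ((cmod (ip x y))^2 / q)"
    unfolding t_def using cn by simp
  also have "t * cnj (ip x y) = complex_of_real ((cmod (ip x y))^2 / q)"
    unfolding t_def using cn by (simp add: mult.commute)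
  also have "t * cnj t * ip y y = complex_of_real ((cmod (ip x y))^2 / q)"
    unfolding t_def yy using q cn by (simp add: power2_eq_square field_simps)
  finally have "0 \<le> Re (ip x x) - (cmod (ip x y))^2 / q" by simp
  then show ?thesis using q unfolding q_def by (simp add: field_simps)
qed

lemma CS: assumes "x \<in> S" "y \<in> S" shows "cmod (ip x y) \<le> N x * N y"
proof -
  have "(cmod (ip x y))^2 \<le> (N x * N y)^2"
    using CS_sq[OF assms] by (simp add: power_mult_distrib N_sq assms)
  then show ?thesis using N_ge0 assms by (meson mult_nonneg_nonneg power2_le_imp_le)
qed

lemma N_add: assumes "x \<in> S" "y \<in> S" shows "N (x + y) \<le> N x + N y"
proof -
  have "(N (x + y))^2 = Re (ip x x) + Re (ip y y) + 2 * Re (ip x y)"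
    using assms by (simp add: N_sq ip_add1 ip_add2 ip_sym[of y x])
  also have "\<dots> \<le> (N x)^2 + (N y)^2 + 2 * (N x * N y)"
    using CS[OF assms] complex_Re_le_cmod[of "ip x y"] assms by (simp add: N_sq)
  also have "\<dots> = (N x + N y)^2" by (simp add: power2_eq_square algebra_simps)
  finally show ?thesis using N_ge0 assms by (meson add_nonneg_nonneg power2_le_imp_le)
qed

lemma N_neg: "x \<in> S \<Longrightarrow> N (- x) = N x"
  by (simp add: N_def ipnorm_def ip_neg1 ip_neg2)
lemma N_commute: "x \<in> S \<Longrightarrow> y \<in> S \<Longrightarrow> N (x - y) = N (y - x)"
  using N_neg[of "y - x"] by simp
lemma N_tri: "x \<in> S \<Longrightarrow> y \<in> S \<Longrightarrow> z \<in> S \<Longrightarrow> N (x - z) \<le> N (x - y) + N (y - z)"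
  using N_add[of "x - y" "y - z"] by simp

lemma conv_unique:
  assumes "\<forall>n. f n \<in> S" "a \<in> S" "b \<in> S" "ip_conv ip f a" "ip_conv ip f b"
  shows "a = b"
proof (rule ccontr)
  assume "a \<noteq> b"
  then have e: "N (a - b) > 0" using N0_iff N_ge0 assms by (metis S_diff eq_iff_diff_eq_0 less_eq_real_def)
  have e2: "N (a - b) / 2 > 0" using e by simp
  obtain n1 where n1: "\<forall>n\<ge>n1. N (f n - a) < N (a - b) / 2"
    using assms(4) e2 unfolding ip_conv_def N_def by blast
  obtain n2 where n2: "\<forall>n\<ge>n2. N (f n - b) < N (a - b) / 2"
    using assms(5) e2 unfolding ip_conv_def N_def by blast
  define n where "n = max n1 n2"
  have "N (a - b) \<le> N (a - f n) + N (f n - b)" using N_tri assms by blast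
  also have "N (a - f n) = N (f n - a)" using N_commute assms by blast
  finally show False using n1[rule_format, of n] n2[rule_format, of n] n_def by simp
qed


lemma parallelogram:
  assumes "a \<in> S" "b \<in> S"
  shows "Re (ip (a - b) (a - b)) = 2 * Re (ip a a) + 2 * Re (ip b b) - 4 * Re (ip (sm (1/2) (a + b)) (sm (1/2) (a + b)))"
proof -
  have "ip (sm (1/2) (a + b)) (sm (1/2) (a + b)) = (1/4) * ip (a + b) (a + b)"
    using assms by (simp add: ip_sm1 ip_sm2)
  then show ?thesis using assms by (simp add: ip_sm1 ip_sm2 ip_add1 ip_add2 ip_diff1 ip_diff2 algebra_simps)
qed

lemma minimize:
  assumes complete: "\<forall>f. (\<forall>n. f n \<in> S) \<and> ip_cauchy ip f \<longrightarrow> (\<exists>l\<in>S. ip_conv ip f l)"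
    and D0S: "D0 \<subseteq> S" and D0sub: "csubspace sm D0"
    and phi_add: "\<forall>x\<in>S. \<forall>y\<in>S. \<phi> (x + y) = \<phi> x + \<phi> y"
    and phi_sm: "\<forall>a. \<forall>x\<in>S. \<phi> (sm a x) = a * \<phi> x"
    and phi_bd: "\<forall>x\<in>S. cmod (\<phi> x) \<le> K * N x"
  shows "\<exists>m\<in>S. (\<forall>e>0. \<exists>d\<in>D0. N (m - d) < e) \<and> (\<forall>d\<in>D0. ip d m = \<phi> d)"
proof -
  define J where "J y = Re (ip y y) - 2 * Re (\<phi> y)" for y
  have D0_0: "0 \<in> D0" and D0_add: "\<And>x y. x \<in> D0 \<Longrightarrow> y \<in> D0 \<Longrightarrow> x + y \<in> D0"
    and D0_sm: "\<And>a x. x \<in> D0 \<Longrightarrow> sm a x \<in> D0"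
    using D0sub unfolding csubspace_def by blast+
  have Jlb: "J y \<ge> -(K^2)" if "y \<in> S" for y
  proof -
    have "Re (\<phi> y) \<le> K * N y" using phi_bd that complex_Re_le_cmod order_trans by blast
    then have "J y \<ge> (N y)^2 - 2 * (K * N y)" unfolding J_def using N_sq[OF that] by simp
    moreover have "(N y)^2 - 2 * (K * N y) = (N y - K)^2 - K^2" by (simp add: power2_eq_square algebra_simps)
    moreover have "(N y - K)^2 \<ge> 0" by simp
    ultimately show ?thesis by linarith
  qed
  define \<mu> where "\<mu> = Inf (J ` D0)"
  have bdd: "bdd_below (J ` D0)" using Jlb D0S by (meson bdd_belowI2 subsetD)
  have J_ge: "\<mu> \<le> J d" if "d \<in> D0" for d unfolding \<mu>_def using bdd that by (simp add: cInf_lower)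
  have "\<forall>n. \<exists>d. d \<in> D0 \<and> J d < \<mu> + 1 / (real n + 1)"
  proof
    fix n :: nat
    have "Inf (J ` D0) < \<mu> + 1 / (real n + 1)" unfolding \<mu>_def by (simp add: add_pos_pos)
    then obtain y where "y \<in> J ` D0" "y < \<mu> + 1 / (real n + 1)"
      using cInf_less_iff[OF _ bdd] D0_0 by blast
    then show "\<exists>d. d \<in> D0 \<and> J d < \<mu> + 1 / (real n + 1)" by blast
  qed
  then obtain d where dD: "\<And>n. d n \<in> D0" and dJ: "\<And>n. J (d n) < \<mu> + 1 / (real n + 1)"
    by metis
  have dS: "\<And>n. d n \<in> S" using dD D0S by blast
  have cauchy_est: "(N (d p - d q))^2 \<le> 2 / (real p + 1) + 2 / (real q + 1)" for p q
  proof -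
    define mid where "mid = sm (1/2) (d p + d q)"
    have midD: "mid \<in> D0" unfolding mid_def using dD D0_add D0_sm by blast
    have phm: "\<phi> mid = (1/2) * (\<phi> (d p) + \<phi> (d q))" unfolding mid_def using phi_sm phi_add dS by simp
    have "Re (\<phi> mid) = (Re (\<phi> (d p)) + Re (\<phi> (d q))) / 2" using arg_cong[where f=Re, OF phm] by (simp del: divide_complex_def)
    then have "(N (d p - d q))^2 = 2 * J (d p) + 2 * J (d q) - 4 * J mid"
      using parallelogram[OF dS dS, of p q] N_sq dS unfolding J_def mid_def by simp
    also have "\<dots> \<le> 2 * (\<mu> + 1 / (real p + 1)) + 2 * (\<mu> + 1 / (real q + 1)) - 4 * \<mu>"
      using dJ[of p] dJ[of q] J_ge[OF midD] by argo
    finally show ?thesis by simp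
  qed
  have "ip_cauchy ip d"
    unfolding ip_cauchy_def
  proof (intro allI impI)
    fix e :: real assume e: "e > 0"
    obtain M :: nat where M: "4 / e^2 < real M" using reals_Archimedean2 by blast
    have "\<forall>p\<ge>M. \<forall>q\<ge>M. ipnorm ip (d p - d q) < e"
    proof (intro allI impI)
      fix p q assume pq: "p \<ge> M" "q \<ge> M"
      have "2 / (real p + 1) \<le> 2 / (real M + 1)" "2 / (real q + 1) \<le> 2 / (real M + 1)"
        using pq by (simp_all add: frac_le)
      moreover have "4 / (real M + 1) < e^2"
      proof -
        have "4 < e^2 * real M" using M e by (simp add: field_simps)
        moreover have "e^2 > 0" using e by simp
        moreover have "e^2 * (real M + 1) = e^2 * real M + e^2" by (simp add: algebra_simps)
        ultimately have "4 < e^2 * (real M + 1)" by linarith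
        then show ?thesis using e by (simp add: field_simps)
      qed
      ultimately have "(N (d p - d q))^2 < e^2" using cauchy_est[of p q] by linarith
      then have "N (d p - d q) < e" using e by (simp add: power_less_imp_less_base)
      then show "ipnorm ip (d p - d q) < e" by (simp add: N_def)
    qed
    then show "\<exists>M. \<forall>p\<ge>M. \<forall>q\<ge>M. ipnorm ip (d p - d q) < e" by blast
  qed
  then obtain m where mS: "m \<in> S" and conv: "ip_conv ip d m" using complete dS by blast
  have conv': "\<exists>M. \<forall>n\<ge>M. N (d n - m) < e" if "e > 0" for e
    using conv that unfolding ip_conv_def N_def by blast
  have clos: "\<forall>e>0. \<exists>d'\<in>D0. N (m - d') < e"
  proof (intro allI impI)
    fix e :: real assume "e > 0"
    then obtain M where "\<forall>n\<ge>M. N (d n - m) < e" using conv' by blast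
    then have "N (m - d M) < e" using N_commute[OF mS dS] by simp
    then show "\<exists>d'\<in>D0. N (m - d') < e" using dD by blast
  qed
  have orth: "ip u m = \<phi> u" if uD: "u \<in> D0" for u
  proof (rule ccontr)
    assume ne: "ip u m \<noteq> \<phi> u"
    have uS: "u \<in> S" using uD D0S by blast
    define w where "w = ip u m - \<phi> u"
    define q where "q = Re (ip u u)"
    have q0: "q \<ge> 0" unfolding q_def using ip_pos uS by blast
    define s where "s = 1 / (q + 1)"
    have s0: "s > 0" unfolding s_def using q0 by simp
    have sq: "s * q < 1" unfolding s_def using q0 by (simp add: field_simps)
    define t where "t = - complex_of_real s * cnj w"
    define g where "g y = 2 * Re (t * (ip u y - \<phi> u)) + (cmod t)^2 * q" for y
    have w0: "cmod w > 0" using ne unfolding w_def by simp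
    define \<eta> where "\<eta> = s * (cmod w)^2"
    have eta0: "\<eta> > 0" unfolding \<eta>_def using s0 w0 by simp
    have gm: "g m \<le> - \<eta>"
    proof -
      have h1: "t * (ip u m - \<phi> u) = - complex_of_real (s * (cmod w)^2)"
      proof -
        have "cnj w * w = complex_of_real ((cmod w)^2)" by (metis complex_norm_square mult.commute)
        then show ?thesis unfolding t_def w_def[symmetric] by simp
      qed
      have h1': "Re (t * (ip u m - \<phi> u)) = - (s * (cmod w)^2)" unfolding h1 by simp
      have h2: "(cmod t)^2 = s^2 * (cmod w)^2" unfolding t_def using s0
        by (simp add: norm_mult power_mult_distrib)
      have "g m = - 2 * (s * (cmod w)^2) + s * (s * q) * (cmod w)^2"
        unfolding g_def h1' h2 by (simp add: power2_eq_square algebra_simps)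
      also have "\<dots> \<le> - 2 * (s * (cmod w)^2) + s * 1 * (cmod w)^2"
        using sq s0 by (intro add_left_mono mult_right_mono mult_left_mono) auto
      finally show ?thesis unfolding \<eta>_def by simp
    qed
    have expand: "J (a + sm t u) = J a + g a" if aS: "a \<in> S" for a
    proof -
      have "ip (a + sm t u) (a + sm t u) = ip a a + cnj t * ip a u + t * ip u a + t * cnj t * ip u u"
        using aS uS by (simp add: ip_add1 ip_add2 ip_sm1 ip_sm2 algebra_simps)
      moreover have "ip a u = cnj (ip u a)" using ip_sym aS uS by blast
      moreover have "ip u u = complex_of_real q" using ip_self_real uS q_def by simp
      moreover have "t * cnj t = complex_of_real ((cmod t)^2)" by (metis complex_norm_square)
      moreover have "\<phi> (a + sm t u) = \<phi> a + t * \<phi> u" using phi_add phi_sm aS uS by simp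
      ultimately show ?thesis unfolding J_def g_def
        by (simp add: algebra_simps)
    qed
    have gdn: "g (d n) > - 1 / (real n + 1)" for n
    proof -
      have "d n + sm t u \<in> D0" using dD uD D0_add D0_sm by blast
      then have "\<mu> \<le> J (d n + sm t u)" by (rule J_ge)
      then have "\<mu> \<le> J (d n) + g (d n)" using expand dS by simp
      then show ?thesis using dJ[of n] by simp
    qed
    define C where "C = 2 * cmod t * N u + 1"
    have C0: "C > 0" unfolding C_def using mult_nonneg_nonneg[OF norm_ge_zero[of t] N_ge0[OF uS]] by linarith
    have diff: "g (d n) - g m \<le> C * N (d n - m)" for n
    proof -
      have "g (d n) - g m = 2 * Re (t * ip u (d n - m))"
        unfolding g_def using uS dS mS by (simp add: ip_diff2 algebra_simps)
      also have "\<dots> \<le> 2 * (cmod t * (N u * N (d n - m)))"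
      proof -
        have "Re (t * ip u (d n - m)) \<le> cmod (t * ip u (d n - m))" by (rule complex_Re_le_cmod)
        also have "\<dots> = cmod t * cmod (ip u (d n - m))" by (simp add: norm_mult)
        also have "\<dots> \<le> cmod t * (N u * N (d n - m))"
          using CS[OF uS S_diff[OF dS mS], of n] by (intro mult_left_mono) auto
        finally show ?thesis by simp
      qed
      also have "\<dots> \<le> C * N (d n - m)"
        unfolding C_def using N_ge0[OF S_diff[OF dS mS], of n] by (simp add: algebra_simps)
      finally show ?thesis .
    qed
    obtain M1 where M1: "\<forall>n\<ge>M1. N (d n - m) < \<eta> / (2 * C)"
      using conv'[of "\<eta> / (2 * C)"] eta0 C0 by auto
    obtain M2 :: nat where M2: "2 / \<eta> < real M2" using reals_Archimedean2 by blast
    define n where "n = max M1 M2"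
    have "C * N (d n - m) < C * (\<eta> / (2 * C))"
      using M1 n_def C0 by (intro mult_strict_left_mono) auto
    also have "\<dots> = \<eta> / 2" using C0 by simp
    finally have "g (d n) < - \<eta> / 2" using diff[of n] gm by linarith
    moreover have "1 / (real n + 1) < \<eta> / 2"
    proof -
      have "2 < \<eta> * real M2" using M2 eta0 by (simp add: field_simps)
      moreover have "real M2 \<le> real n" unfolding n_def by simp
      ultimately have "2 < \<eta> * (real n + 1)" using eta0
        by (smt (verit) mult_left_mono)
      then show ?thesis by (simp add: field_simps)
    qed
    ultimately show False using gdn[of n] by linarith
  qed
  show ?thesis using mS clos orth by blast
qed

end



lemma conv_dom:
  fixes a b :: "nat \<Rightarrow> real"
  assumes "\<forall>e>0. \<exists>M. \<forall>n\<ge>M. a n < e" "\<And>n. b n \<le> K * a n" "K > 0"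
  shows "\<forall>e>0. \<exists>M. \<forall>n\<ge>M. b n < e"
proof (intro allI impI)
  fix e :: real assume "e > 0"
  then obtain M where M: "\<forall>n\<ge>M. a n < e / K" using assms(1,3) by (meson divide_pos_pos)
  have "\<forall>n\<ge>M. b n < e"
  proof (intro allI impI)
    fix n assume "n \<ge> M"
    then have "K * a n < K * (e / K)" using M assms(3) by (intro mult_strict_left_mono) auto
    then show "b n < e" using assms(2)[of n] assms(3) by simp
  qed
  then show "\<exists>M. \<forall>n\<ge>M. b n < e" by blast
qed

lemma sqrt_sum_le: "0 \<le> a \<Longrightarrow> 0 \<le> b \<Longrightarrow> sqrt (a^2 + b^2) \<le> a + b"
  by (rule real_le_lsqrt) (auto simp: power2_eq_square algebra_simps)

context ips begin
lemma dense_orth: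
  assumes "D \<subseteq> S" "w \<in> S" "\<forall>e>0. \<exists>d\<in>D. N (w - d) < e" "\<forall>d\<in>D. ip d w = 0"
  shows "w = 0"
proof (rule ccontr)
  assume "w \<noteq> 0"
  then have pos: "N w > 0" using N0_iff[OF assms(2)] N_ge0[OF assms(2)] by linarith
  then obtain d where dD: "d \<in> D" and d: "N (w - d) < N w / 2" using assms(3) by (meson half_gt_zero)
  have dS: "d \<in> S" using dD assms(1) by blast
  have "ip w w = ip (w - d) w + ip d w" using ip_diff1[OF assms(2) dS assms(2)] by simp
  also have "ip d w = 0" using assms(4) dD by blast
  finally have "(N w)^2 = Re (ip (w - d) w)" using N_sq[OF assms(2)] by simp
  also have "\<dots> \<le> cmod (ip (w - d) w)" by (rule complex_Re_le_cmod)
  also have "\<dots> \<le> N (w - d) * N w" using CS assms(2) dS by simp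
  also have "\<dots> \<le> N w / 2 * N w" using d pos by (intro mult_right_mono) auto
  finally show False using pos by (simp add: power2_eq_square)
qed

lemma conv_iff: "ip_conv ip f l \<longleftrightarrow> (\<forall>e>0. \<exists>M. \<forall>n\<ge>M. N (f n - l) < e)"
  by (simp add: ip_conv_def N_def)
end

locale setting =
  fixes smX :: "complex \<Rightarrow> 'x::ab_group_add \<Rightarrow> 'x" and ipX :: "'x \<Rightarrow> 'x \<Rightarrow> complex"
    and smY :: "complex \<Rightarrow> 'y::ab_group_add \<Rightarrow> 'y" and ipY :: "'y \<Rightarrow> 'y \<Rightarrow> complex"
    and DA :: "'x set" and A :: "'x \<Rightarrow> 'y" and DB :: "'y set" and B :: "'y \<Rightarrow> 'x"
    and c :: real
  assumes HX: "hilbert_space smX UNIV ipX"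
    and HY: "hilbert_space smY UNIV ipY"
    and A_lin: "linear_operator smX UNIV smY UNIV DA A"
    and A_dense: "densely_defined UNIV ipX DA"
    and A_closed: "closed_operator UNIV ipX UNIV ipY DA A"
    and c_pos: "c > 0"
    and A_coercive: "\<forall>x\<in>DA. ipnorm ipY (A x) \<ge> c * ipnorm ipX x"
    and B_lin: "linear_operator smY UNIV smX UNIV DB B"
    and B_dense: "densely_defined UNIV ipY DB"
    and B_closed: "closed_operator UNIV ipY UNIV ipX DB B"
    and AB: "op_incl (adj_dom UNIV ipX UNIV ipY DA A) (adj_fun UNIV ipX UNIV ipY DA A)
               DB (\<lambda>y. - B y)"
begin

lemma cvX: "cvector_space smX" using HX unfolding hilbert_space_def by blast
lemma cvY: "cvector_space smY" using HY unfolding hilbert_space_def by blast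
lemma ipoX: "inner_product_on smX UNIV ipX" using HX unfolding hilbert_space_def by blast
lemma ipoY: "inner_product_on smY UNIV ipY" using HY unfolding hilbert_space_def by blast
lemma complX: "\<forall>f. (\<forall>n. f n \<in> UNIV) \<and> ip_cauchy ipX f \<longrightarrow> (\<exists>l\<in>UNIV. ip_conv ipX f l)"
  using HX unfolding hilbert_space_def by blast
lemma complY: "\<forall>f. (\<forall>n. f n \<in> UNIV) \<and> ip_cauchy ipY f \<longrightarrow> (\<exists>l\<in>UNIV. ip_conv ipY f l)"
  using HY unfolding hilbert_space_def by blast

sublocale X: ips smX UNIV ipX by (rule ips.intro[OF cvX ipoX])
sublocale Y: ips smY UNIV ipY by (rule ips.intro[OF cvY ipoY])

lemma DA_sub: "csubspace smX DA"
  by (insert A_lin[unfolded linear_operator_def], elim conjE, assumption)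
lemma A_add': "\<forall>x\<in>DA. \<forall>y\<in>DA. A (x + y) = A x + A y"
  by (insert A_lin[unfolded linear_operator_def], elim conjE, assumption)
lemma A_sm': "\<forall>a. \<forall>x\<in>DA. A (smX a x) = smY a (A x)"
  by (insert A_lin[unfolded linear_operator_def], elim conjE, assumption)
lemma DB_sub: "csubspace smY DB"
  by (insert B_lin[unfolded linear_operator_def], elim conjE, assumption)
lemma B_add': "\<forall>x\<in>DB. \<forall>y\<in>DB. B (x + y) = B x + B y"
  by (insert B_lin[unfolded linear_operator_def], elim conjE, assumption)

lemma DA0[simp]: "0 \<in> DA" using DA_sub unfolding csubspace_def by blast
lemma DA_add[simp]: "x \<in> DA \<Longrightarrow> y \<in> DA \<Longrightarrow> x + y \<in> DA" using DA_sub unfolding csubspace_def by blast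
lemma DA_sm[simp]: "x \<in> DA \<Longrightarrow> smX a x \<in> DA" using DA_sub unfolding csubspace_def by blast
lemma DA_neg[simp]: "x \<in> DA \<Longrightarrow> - x \<in> DA" using DA_sm[of x "-1"] X.sm_m1 by simp
lemma DA_diff[simp]: "x \<in> DA \<Longrightarrow> y \<in> DA \<Longrightarrow> x - y \<in> DA" using DA_add[of x "-y"] by simp
lemma DB0[simp]: "0 \<in> DB" using DB_sub unfolding csubspace_def by blast
lemma DB_add[simp]: "x \<in> DB \<Longrightarrow> y \<in> DB \<Longrightarrow> x + y \<in> DB" using DB_sub unfolding csubspace_def by blast
lemma DB_sm[simp]: "x \<in> DB \<Longrightarrow> smY a x \<in> DB" using DB_sub unfolding csubspace_def by blast

lemma A_add: "x \<in> DA \<Longrightarrow> y \<in> DA \<Longrightarrow> A (x + y) = A x + A y" using A_add' by blast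
lemma A_sm: "x \<in> DA \<Longrightarrow> A (smX a x) = smY a (A x)" using A_sm' by blast
lemma A0[simp]: "A 0 = 0" using A_add[of 0 0] by simp
lemma A_neg: "x \<in> DA \<Longrightarrow> A (- x) = - A x" using A_sm[of x "-1"] X.sm_m1 Y.sm_m1 by simp
lemma A_diff: "x \<in> DA \<Longrightarrow> y \<in> DA \<Longrightarrow> A (x - y) = A x - A y"
  using A_add[of x "-y"] A_neg[of y] by simp
lemma B_add: "x \<in> DB \<Longrightarrow> y \<in> DB \<Longrightarrow> B (x + y) = B x + B y" using B_add' by blast
lemma B0[simp]: "B 0 = 0" using B_add[of 0 0] by simp

lemma coerc: "x \<in> DA \<Longrightarrow> c * X.N x \<le> Y.N (A x)"
  using A_coercive by (simp add: X.N_def Y.N_def)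

definition ipH where "ipH x y = ipY (A x) (A y)"

lemma ipoH: "inner_product_on smX DA ipH"
  unfolding inner_product_on_def
proof (intro conjI ballI allI impI)
  show "csubspace smX DA" by (rule DA_sub)
  fix x y assume x: "x \<in> DA" and y: "y \<in> DA"
  show "ipH x y = cnj (ipH y x)" unfolding ipH_def by (rule Y.ip_sym) auto
  fix z assume z: "z \<in> DA"
  show "ipH (x + y) z = ipH x z + ipH y z" unfolding ipH_def using x y by (simp add: A_add Y.ip_add1)
next
  fix a x y assume x: "x \<in> DA" and y: "y \<in> DA"
  show "ipH (smX a x) y = a * ipH x y" unfolding ipH_def using x by (simp add: A_sm Y.ip_sm1)
next
  fix x assume x: "x \<in> DA"
  show "0 \<le> Re (ipH x x)" unfolding ipH_def by (rule Y.ip_pos) simp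
  assume h: "ipH x x = 0"
  then have "Y.N (A x) = 0" unfolding ipH_def Y.N_def ipnorm_def by simp
  then have "c * X.N x \<le> 0" using coerc[OF x] by simp
  then have "X.N x = 0" using c_pos X.N_ge0[of x] by (simp add: mult_le_0_iff)
  then show "x = 0" using X.N0_iff by simp
qed

sublocale H: ips smX DA ipH by (rule ips.intro[OF cvX ipoH])

lemma HN: "H.N x = Y.N (A x)" by (simp add: H.N_def Y.N_def ipnorm_def ipH_def)

lemma XN_le: "x \<in> DA \<Longrightarrow> X.N x \<le> H.N x / c"
  using coerc[of x] c_pos by (simp add: HN field_simps mult.commute)

lemma complH: "\<forall>f. (\<forall>n. f n \<in> DA) \<and> ip_cauchy ipH f \<longrightarrow> (\<exists>l\<in>DA. ip_conv ipH f l)"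
proof (intro allI impI, elim conjE)
  fix f assume fD: "\<forall>n. f n \<in> DA" and cf: "ip_cauchy ipH f"
  have cY: "ip_cauchy ipY (\<lambda>n. A (f n))"
    using cf fD unfolding ip_cauchy_def
    by (metis A_diff HN H.N_def Y.N_def)
  obtain y where y: "ip_conv ipY (\<lambda>n. A (f n)) y" using complY cY by blast
  have cX: "ip_cauchy ipX f"
    unfolding ip_cauchy_def
  proof (intro allI impI)
    fix e :: real assume e: "e > 0"
    then obtain M where M: "\<forall>m\<ge>M. \<forall>n\<ge>M. ipnorm ipH (f m - f n) < c * e"
      using cf c_pos unfolding ip_cauchy_def by (meson mult_pos_pos)
    have "\<forall>m\<ge>M. \<forall>n\<ge>M. ipnorm ipX (f m - f n) < e"
    proof (intro allI impI)
      fix m n assume "m \<ge> M" "n \<ge> M"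
      then have "H.N (f m - f n) < c * e" using M by (simp add: H.N_def)
      moreover have "c * X.N (f m - f n) \<le> H.N (f m - f n)" using coerc fD by (simp add: HN)
      ultimately have "c * X.N (f m - f n) < c * e" by linarith
      then have "X.N (f m - f n) < e" using c_pos by simp
      then show "ipnorm ipX (f m - f n) < e" by (simp add: X.N_def)
    qed
    then show "\<exists>M. \<forall>m\<ge>M. \<forall>n\<ge>M. ipnorm ipX (f m - f n) < e" by blast
  qed
  obtain x where x: "ip_conv ipX f x" using complX cX by blast
  have "x \<in> DA \<and> A x = y" using A_closed fD x y unfolding closed_operator_def by blast
  then have xD: "x \<in> DA" and Ax: "A x = y" by auto
  have "ip_conv ipH f x"
    using y fD xD unfolding ip_conv_def Ax[symmetric]
    by (metis A_diff HN H.N_def Y.N_def)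
  then show "\<exists>l\<in>DA. ip_conv ipH f l" using xD by blast
qed


lemma riesz: "\<exists>r\<in>DA. \<forall>y\<in>DA. ipH y r = ipX y u"
proof -
  have "\<exists>m\<in>DA. (\<forall>e>0. \<exists>d\<in>DA. H.N (m - d) < e) \<and> (\<forall>d\<in>DA. ipH d m = ipX d u)"
  proof (rule H.minimize[OF complH subset_refl DA_sub, where K = "X.N u / c"])
    show "\<forall>x\<in>DA. \<forall>y\<in>DA. ipX (x + y) u = ipX x u + ipX y u" by (simp add: X.ip_add1)
    show "\<forall>a. \<forall>x\<in>DA. ipX (smX a x) u = a * ipX x u" by (simp add: X.ip_sm1)
    show "\<forall>x\<in>DA. cmod (ipX x u) \<le> X.N u / c * H.N x"
    proof
      fix x assume x: "x \<in> DA"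
      have "cmod (ipX x u) \<le> X.N x * X.N u" by (rule X.CS) auto
      also have "\<dots> \<le> H.N x / c * X.N u" using XN_le[OF x] X.N_ge0[of u] by (intro mult_right_mono) auto
      finally show "cmod (ipX x u) \<le> X.N u / c * H.N x" by (simp add: field_simps)
    qed
  qed
  then show ?thesis by blast
qed

lemma adj_unique:
  assumes "\<forall>x\<in>DA. ipY (A x) y = ipX x z" "\<forall>x\<in>DA. ipY (A x) y = ipX x z'"
  shows "z = z'"
proof -
  have "z - z' = 0"
  proof (rule X.dense_orth[of DA])
    show "\<forall>e>0. \<exists>d\<in>DA. X.N (z - z' - d) < e"
      using A_dense unfolding densely_defined_def X.N_def by blast
    show "\<forall>d\<in>DA. ipX d (z - z') = 0" using assms by (simp add: X.ip_diff2)
  qed auto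
  then show ?thesis by simp
qed

lemma adj_char:
  assumes "\<forall>x\<in>DA. ipY (A x) y = ipX x z"
  shows "y \<in> DB" "B y = - z"
proof -
  have yd: "y \<in> adj_dom UNIV ipX UNIV ipY DA A" unfolding adj_dom_def using assms by blast
  have "adj_fun UNIV ipX UNIV ipY DA A y = z"
    unfolding adj_fun_def
  proof (rule the_equality)
    show "z \<in> UNIV \<and> (\<forall>x\<in>DA. ipY (A x) y = ipX x z)" using assms by blast
    fix z' assume "z' \<in> UNIV \<and> (\<forall>x\<in>DA. ipY (A x) y = ipX x z')"
    then show "z' = z" using adj_unique assms by blast
  qed
  moreover have "y \<in> DB" "adj_fun UNIV ipX UNIV ipY DA A y = - B y"
    using AB yd unfolding op_incl_def by auto
  ultimately show "y \<in> DB" "B y = - z" by auto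
qed

definition D0 where "D0 = {d \<in> DA. A d \<in> DB}"

lemma D0_sub: "csubspace smX D0"
  unfolding csubspace_def D0_def by (auto simp: A_add A_sm)

lemma D0_dense: assumes x: "x \<in> DA" and e: "e > 0" shows "\<exists>d\<in>D0. H.N (x - d) < e"
proof -
  have "\<exists>m\<in>DA. (\<forall>e>0. \<exists>d\<in>D0. H.N (m - d) < e) \<and> (\<forall>d\<in>D0. ipH d m = ipH d x)"
  proof (rule H.minimize[OF complH _ D0_sub, where K = "H.N x"])
    show "D0 \<subseteq> DA" unfolding D0_def by auto
    show "\<forall>a\<in>DA. \<forall>y\<in>DA. ipH (a + y) x = ipH a x + ipH y x" using x by (simp add: H.ip_add1)
    show "\<forall>a. \<forall>y\<in>DA. ipH (smX a y) x = a * ipH y x" using x by (simp add: H.ip_sm1)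
    show "\<forall>y\<in>DA. cmod (ipH y x) \<le> H.N x * H.N y" using x H.CS by (simp add: mult.commute)
  qed
  then obtain m where mD: "m \<in> DA" and mcl: "\<forall>e>0. \<exists>d\<in>D0. H.N (m - d) < e"
    and morth: "\<forall>d\<in>D0. ipH d m = ipH d x" by blast
  define u where "u = x - m"
  have uD: "u \<in> DA" unfolding u_def using x mD by simp
  have uorth: "\<forall>d\<in>D0. ipH d u = 0"
    using morth x mD unfolding u_def D0_def by (simp add: H.ip_diff2)
  obtain r where rD: "r \<in> DA" and r: "\<forall>y\<in>DA. ipH y r = ipX y u" using riesz by blast
  have "\<forall>y\<in>DA. ipY (A y) (A r) = ipX y u" using r unfolding ipH_def by blast
  then have "A r \<in> DB" by (rule adj_char)
  then have "r \<in> D0" unfolding D0_def using rD by blast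
  then have "ipH r u = 0" using uorth by blast
  moreover have "ipH u r = cnj (ipH r u)" using H.ip_sym rD uD by blast
  ultimately have "ipX u u = 0" using r uD by simp
  then have "u = 0" using X.ip_def0 by simp
  then have "m = x" unfolding u_def by simp
  then show ?thesis using mcl e by blast
qed


definition "ZH = DA \<times> (UNIV :: 'x set)"
definition "IPZ = (\<lambda>z w. ipY (A (fst z)) (A (fst w)) + ipX (snd z) (snd w))"
definition "DCA = {z \<in> DA \<times> DA. A (fst z) \<in> DB}"
definition "CA = (\<lambda>z. (snd z, B (A (fst z))))"
definition "DCAs = {z \<in> DA \<times> DA. A (fst z) \<in> adj_dom UNIV ipX UNIV ipY DA A}"
definition "CAs = (\<lambda>z. (snd z, - adj_fun UNIV ipX UNIV ipY DA A (A (fst z))))"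

lemma ZN: assumes "fst z \<in> DA" shows "ipnorm IPZ z = sqrt ((H.N (fst z))^2 + (X.N (snd z))^2)"
proof -
  have "Re (IPZ z z) = Re (ipH (fst z) (fst z)) + Re (ipX (snd z) (snd z))"
    unfolding IPZ_def ipH_def by simp
  also have "\<dots> = (H.N (fst z))^2 + (X.N (snd z))^2" using assms by (simp add: H.N_sq X.N_sq)
  finally show ?thesis unfolding ipnorm_def by simp
qed

lemma ZN_fst: assumes "fst z \<in> DA" shows "H.N (fst z) \<le> ipnorm IPZ z"
  unfolding ZN[OF assms] by (rule real_le_rsqrt) simp
lemma ZN_snd: assumes "fst z \<in> DA" shows "X.N (snd z) \<le> ipnorm IPZ z"
  unfolding ZN[OF assms] by (rule real_le_rsqrt) simp
lemma ZN_le: assumes "fst z \<in> DA" shows "ipnorm IPZ z \<le> H.N (fst z) + X.N (snd z)"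
  unfolding ZN[OF assms] using assms by (intro sqrt_sum_le H.N_ge0 X.N_ge0) auto

lemma part1: "densely_defined ZH IPZ DCA"
  unfolding densely_defined_def
proof (intro conjI ballI allI impI)
  show "DCA \<subseteq> ZH" unfolding DCA_def ZH_def by auto
  fix x e assume xZ: "x \<in> ZH" and e: "(e::real) > 0"
  then have x1: "fst x \<in> DA" unfolding ZH_def by auto
  obtain d1 where d1: "d1 \<in> D0" "H.N (fst x - d1) < e / 2" using D0_dense[OF x1, of "e/2"] e by auto
  obtain d2 where d2: "d2 \<in> DA" "X.N (snd x - d2) < e / 2"
    using A_dense e unfolding densely_defined_def X.N_def by (meson half_gt_zero iso_tuple_UNIV_I)
  have dD: "(d1, d2) \<in> DCA" using d1 d2 unfolding DCA_def D0_def by auto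
  have f: "fst (x - (d1, d2)) \<in> DA" using x1 d1 unfolding D0_def by auto
  have "ipnorm IPZ (x - (d1, d2)) \<le> H.N (fst (x - (d1, d2))) + X.N (snd (x - (d1, d2)))"
    by (rule ZN_le[OF f])
  also have "\<dots> < e" using d1 d2 by simp
  finally show "\<exists>d\<in>DCA. ipnorm IPZ (x - d) < e" using dD by blast
qed

lemma part3: "op_incl DCAs CAs DCA CA"
  unfolding op_incl_def
proof (intro conjI ballI)
  show "DCAs \<subseteq> DCA" unfolding DCAs_def DCA_def using AB unfolding op_incl_def by auto
  fix z assume "z \<in> DCAs"
  then have "A (fst z) \<in> adj_dom UNIV ipX UNIV ipY DA A" unfolding DCAs_def by auto
  then have "adj_fun UNIV ipX UNIV ipY DA A (A (fst z)) = - B (A (fst z))"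
    using AB unfolding op_incl_def by auto
  then show "CAs z = CA z" unfolding CAs_def CA_def by simp
qed


lemma part2: "closed_operator ZH IPZ ZH IPZ DCA CA"
  unfolding closed_operator_def
proof (intro allI impI, elim conjE)
  fix f x y
  assume fD: "\<forall>n. f n \<in> DCA" and xZ: "x \<in> ZH" and yZ: "y \<in> ZH"
    and cx: "ip_conv IPZ f x" and cy: "ip_conv IPZ (\<lambda>n. CA (f n)) y"
  have f1: "fst (f n) \<in> DA" "snd (f n) \<in> DA" "A (fst (f n)) \<in> DB" for n
    using fD unfolding DCA_def by (auto simp: mem_Times_iff)
  have x1: "fst x \<in> DA" using xZ unfolding ZH_def by auto
  have y1: "fst y \<in> DA" using yZ unfolding ZH_def by auto
  have cx': "\<forall>e>0. \<exists>M. \<forall>n\<ge>M. ipnorm IPZ (f n - x) < e" using cx unfolding ip_conv_def .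
  have cy': "\<forall>e>0. \<exists>M. \<forall>n\<ge>M. ipnorm IPZ (CA (f n) - y) < e" using cy unfolding ip_conv_def .
  have c1: "\<forall>e>0. \<exists>M. \<forall>n\<ge>M. H.N (fst (f n) - fst x) < e"
  proof (rule conv_dom[OF cx', where K = 1])
    fix n show "H.N (fst (f n) - fst x) \<le> 1 * ipnorm IPZ (f n - x)"
      using ZN_fst[of "f n - x"] f1 x1 by simp
  qed simp
  have c2: "\<forall>e>0. \<exists>M. \<forall>n\<ge>M. X.N (snd (f n) - snd x) < e"
  proof (rule conv_dom[OF cx', where K = 1])
    fix n show "X.N (snd (f n) - snd x) \<le> 1 * ipnorm IPZ (f n - x)"
      using ZN_snd[of "f n - x"] f1 x1 by simp
  qed simp
  have c3: "\<forall>e>0. \<exists>M. \<forall>n\<ge>M. H.N (snd (f n) - fst y) < e"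
  proof (rule conv_dom[OF cy', where K = 1])
    fix n show "H.N (snd (f n) - fst y) \<le> 1 * ipnorm IPZ (CA (f n) - y)"
      using ZN_fst[of "CA (f n) - y"] f1 y1 by (simp add: CA_def)
  qed simp
  have c4: "\<forall>e>0. \<exists>M. \<forall>n\<ge>M. X.N (B (A (fst (f n))) - snd y) < e"
  proof (rule conv_dom[OF cy', where K = 1])
    fix n show "X.N (B (A (fst (f n))) - snd y) \<le> 1 * ipnorm IPZ (CA (f n) - y)"
      using ZN_snd[of "CA (f n) - y"] f1 y1 by (simp add: CA_def)
  qed simp
  have c3': "\<forall>e>0. \<exists>M. \<forall>n\<ge>M. X.N (snd (f n) - fst y) < e"
  proof (rule conv_dom[OF c3, where K = "1 / c"])
    fix n show "X.N (snd (f n) - fst y) \<le> 1 / c * H.N (snd (f n) - fst y)"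
      using XN_le[of "snd (f n) - fst y"] f1 y1 by simp
  qed (simp add: c_pos)
  have "fst y = snd x"
    by (rule X.conv_unique[of "\<lambda>n. snd (f n)"]) (use c2 c3' in \<open>auto simp: X.conv_iff\<close>)
  then have x2: "snd x \<in> DA" using y1 by simp
  have cA: "ip_conv ipY (\<lambda>n. A (fst (f n))) (A (fst x))"
    using c1 f1 x1 unfolding Y.conv_iff by (simp add: HN A_diff)
  have cB: "ip_conv ipX (\<lambda>n. B (A (fst (f n)))) (snd y)"
    using c4 unfolding X.conv_iff .
  have "A (fst x) \<in> DB \<and> B (A (fst x)) = snd y"
  proof (rule B_closed[unfolded closed_operator_def, rule_format, of "\<lambda>n. A (fst (f n))"])
    show "(\<forall>n. A (fst (f n)) \<in> DB) \<and> A (fst x) \<in> UNIV \<and> snd y \<in> UNIV \<and>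
      ip_conv ipY (\<lambda>n. A (fst (f n))) (A (fst x)) \<and> ip_conv ipX (\<lambda>n. B (A (fst (f n)))) (snd y)"
      using f1(3) cA cB by simp
  qed
  then show "x \<in> DCA \<and> CA x = y"
    using x1 x2 \<open>fst y = snd x\<close> unfolding DCA_def CA_def by (auto simp: prod_eq_iff mem_Times_iff)
qed


lemma IPZ_simp: "IPZ (a, b) v = ipY (A a) (A (fst v)) + ipX b (snd v)"
  unfolding IPZ_def by simp

lemma Z_unique:
  assumes vZ: "v \<in> ZH" and vZ': "v' \<in> ZH" and h: "\<forall>z\<in>DCA. IPZ z v = IPZ z v'"
  shows "v = v'"
proof -
  have v1: "fst v \<in> DA" "fst v' \<in> DA" using vZ vZ' unfolding ZH_def by auto
  have "fst v - fst v' = 0"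
  proof (rule H.dense_orth[of D0])
    show "D0 \<subseteq> DA" unfolding D0_def by auto
    show "fst v - fst v' \<in> DA" using v1 by simp
    show "\<forall>e>0. \<exists>d\<in>D0. H.N (fst v - fst v' - d) < e" using D0_dense v1 by simp
    show "\<forall>d\<in>D0. ipH d (fst v - fst v') = 0"
    proof
      fix d assume dD: "d \<in> D0"
      then have "(d, 0) \<in> DCA" unfolding D0_def DCA_def by auto
      then have "IPZ (d, 0) v = IPZ (d, 0) v'" using h by blast
      then have "ipH d (fst v) = ipH d (fst v')" by (simp add: IPZ_simp ipH_def)
      then show "ipH d (fst v - fst v') = 0" using dD v1 unfolding D0_def by (simp add: H.ip_diff2)
    qed
  qed
  moreover have "snd v - snd v' = 0"
  proof (rule X.dense_orth[of DA])
    show "\<forall>e>0. \<exists>d\<in>DA. X.N (snd v - snd v' - d) < e"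
      using A_dense unfolding densely_defined_def X.N_def by blast
    show "\<forall>d\<in>DA. ipX d (snd v - snd v') = 0"
    proof
      fix d assume dD: "d \<in> DA"
      then have "(0, d) \<in> DCA" unfolding DCA_def by auto
      then have "IPZ (0, d) v = IPZ (0, d) v'" using h by blast
      then have "ipX d (snd v) = ipX d (snd v')" by (simp add: IPZ_simp)
      then show "ipX d (snd v - snd v') = 0" by (simp add: X.ip_diff2)
    qed
  qed auto
  ultimately show ?thesis by (simp add: prod_eq_iff)
qed

lemma adj_key:
  assumes wZ: "w \<in> ZH" and vZ: "v \<in> ZH" and h: "\<forall>z\<in>DCA. IPZ (CA z) w = IPZ z v"
  shows "w \<in> DCA \<and> v = - CA w"
proof -
  have w1: "fst w \<in> DA" and v1: "fst v \<in> DA" using wZ vZ unfolding ZH_def by auto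
  have a: "\<forall>x\<in>DA. ipY (A x) (A (fst w)) = ipX x (snd v)"
  proof
    fix x assume xD: "x \<in> DA"
    then have "(0, x) \<in> DCA" unfolding DCA_def by auto
    then have "IPZ (CA (0, x)) w = IPZ (0, x) v" using h by blast
    then show "ipY (A x) (A (fst w)) = ipX x (snd v)" by (simp add: CA_def IPZ_simp)
  qed
  have Aw: "A (fst w) \<in> DB" and Bw: "B (A (fst w)) = - snd v" using adj_char[OF a] by auto
  have b: "ipX (B (A d)) (snd w) = ipY (A d) (A (fst v))" if dD: "d \<in> D0" for d
  proof -
    have "(d, 0) \<in> DCA" using dD unfolding D0_def DCA_def by auto
    then have "IPZ (CA (d, 0)) w = IPZ (d, 0) v" using h by blast
    then show ?thesis by (simp add: CA_def IPZ_simp)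
  qed
  define u where "u = snd w + fst v"
  obtain r where rD: "r \<in> DA" and r: "\<forall>y\<in>DA. ipH y r = ipX y u" using riesz by blast
  have r': "\<forall>y\<in>DA. ipY (A y) (A r) = ipX y u" using r unfolding ipH_def by blast
  have Ar: "A r \<in> DB" and Br: "B (A r) = - u" using adj_char[OF r'] by auto
  have "r \<in> D0" unfolding D0_def using rD Ar by blast
  then have "ipX (B (A r)) (snd w) = ipY (A r) (A (fst v))" by (rule b)
  also have "ipY (A r) (A (fst v)) = cnj (ipY (A (fst v)) (A r))" by (rule Y.ip_sym) auto
  also have "ipY (A (fst v)) (A r) = ipX (fst v) u" using r' v1 by blast
  also have "cnj (ipX (fst v) u) = ipX u (fst v)" using X.ip_sym[of u "fst v"] by simp
  finally have "- ipX u (snd w) = ipX u (fst v)" unfolding Br by (simp add: X.ip_neg1)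
  then have neg: "ipX u (fst v) = - ipX u (snd w)" by simp
  have "ipX u u = ipX u (snd w + fst v)" unfolding u_def ..
  also have "\<dots> = ipX u (snd w) + ipX u (fst v)" by (rule X.ip_add2) auto
  finally have "ipX u u = 0" unfolding neg by simp
  then have "u = 0" using X.ip_def0 by simp
  then have w2: "snd w = - fst v" unfolding u_def by (simp add: eq_neg_iff_add_eq_0)
  then have w2D: "snd w \<in> DA" using v1 by simp
  have "w \<in> DCA" using w1 w2D Aw unfolding DCA_def by (auto simp: mem_Times_iff)
  moreover have "v = - CA w" using w2 Bw unfolding CA_def by (auto simp: prod_eq_iff)
  ultimately show ?thesis by blast
qed

lemma part4: "op_incl (adj_dom ZH IPZ ZH IPZ DCA CA) (adj_fun ZH IPZ ZH IPZ DCA CA) DCA (\<lambda>z. - CA z)"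
  unfolding op_incl_def
proof (intro conjI subsetI ballI)
  fix w assume "w \<in> adj_dom ZH IPZ ZH IPZ DCA CA"
  then obtain v where wZ: "w \<in> ZH" and vZ: "v \<in> ZH" and h: "\<forall>z\<in>DCA. IPZ (CA z) w = IPZ z v"
    unfolding adj_dom_def by blast
  have k: "w \<in> DCA \<and> v = - CA w" by (rule adj_key[OF wZ vZ h])
  then show "w \<in> DCA" by blast
  have "adj_fun ZH IPZ ZH IPZ DCA CA w = v"
    unfolding adj_fun_def
  proof (rule the_equality)
    show "v \<in> ZH \<and> (\<forall>x\<in>DCA. IPZ (CA x) w = IPZ x v)" using vZ h by blast
    fix v' assume "v' \<in> ZH \<and> (\<forall>x\<in>DCA. IPZ (CA x) w = IPZ x v')"
    then have v'Z: "v' \<in> ZH" and h': "\<forall>x\<in>DCA. IPZ (CA x) w = IPZ x v'" by blast+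
    have "\<forall>z\<in>DCA. IPZ z v' = IPZ z v"
    proof
      fix z assume z: "z \<in> DCA"
      show "IPZ z v' = IPZ z v" using h'[rule_format, OF z] h[rule_format, OF z] by metis
    qed
    then show "v' = v" by (rule Z_unique[OF v'Z vZ])
  qed
  then show "adj_fun ZH IPZ ZH IPZ DCA CA w = - CA w" using k by simp
qed

end

theorem lemma3p2:
  fixes smX :: "complex \<Rightarrow> 'x::ab_group_add \<Rightarrow> 'x" and ipX :: "'x \<Rightarrow> 'x \<Rightarrow> complex"
    and smY :: "complex \<Rightarrow> 'y::ab_group_add \<Rightarrow> 'y" and ipY :: "'y \<Rightarrow> 'y \<Rightarrow> complex"
    and DA :: "'x set" and A :: "'x \<Rightarrow> 'y" and DB :: "'y set" and B :: "'y \<Rightarrow> 'x"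
    and c :: real
  assumes HX: "hilbert_space smX UNIV ipX"
    and HY: "hilbert_space smY UNIV ipY"
    and A_lin: "linear_operator smX UNIV smY UNIV DA A"
    and A_dense: "densely_defined UNIV ipX DA"
    and A_closed: "closed_operator UNIV ipX UNIV ipY DA A"
    and c_pos: "c > 0"
    and A_coercive: "\<forall>x\<in>DA. ipnorm ipY (A x) \<ge> c * ipnorm ipX x"
    and B_lin: "linear_operator smY UNIV smX UNIV DB B"
    and B_dense: "densely_defined UNIV ipY DB"
    and B_closed: "closed_operator UNIV ipY UNIV ipX DB B"
    and AB: "op_incl (adj_dom UNIV ipX UNIV ipY DA A) (adj_fun UNIV ipX UNIV ipY DA A)
               DB (\<lambda>y. - B y)"
  defines "Zh \<equiv> DA \<times> (UNIV :: 'x set)"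
    and "ipZ \<equiv> \<lambda>z w. ipY (A (fst z)) (A (fst w)) + ipX (snd z) (snd w)"
    and "DcA \<equiv> {z \<in> DA \<times> DA. A (fst z) \<in> DB}"
    and "cA \<equiv> \<lambda>z. (snd z, B (A (fst z)))"
    and "DcAs \<equiv> {z \<in> DA \<times> DA. A (fst z) \<in> adj_dom UNIV ipX UNIV ipY DA A}"
    and "cAs \<equiv> \<lambda>z. (snd z, - adj_fun UNIV ipX UNIV ipY DA A (A (fst z)))"
  shows "densely_defined Zh ipZ DcA
    \<and> closed_operator Zh ipZ Zh ipZ DcA cA
    \<and> op_incl DcAs cAs DcA cA
    \<and> op_incl (adj_dom Zh ipZ Zh ipZ DcA cA) (adj_fun Zh ipZ Zh ipZ DcA cA) DcA (\<lambda>z. - cA z)"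
proof -
  interpret S: setting smX ipX smY ipY DA A DB B c
    by (rule setting.intro[OF assms(1-11)])
  have e1: "Zh = S.ZH" using assms(12) unfolding S.ZH_def by simp
  have e2: "ipZ = S.IPZ" using assms(13) unfolding S.IPZ_def by simp
  have e3: "DcA = S.DCA" using assms(14) unfolding S.DCA_def by simp
  have e4: "cA = S.CA" using assms(15) unfolding S.CA_def by simp
  have e5: "DcAs = S.DCAs" using assms(16) unfolding S.DCAs_def by simp
  have e6: "cAs = S.CAs" using assms(17) unfolding S.CAs_def by simp
  show ?thesis unfolding e1 e2 e3 e4 e5 e6 using S.part1 S.part2 S.part3 S.part4 by blast
qed

end
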